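(* Let $G=(V,E)$ be a finite graph with boundary $B\subseteq V$. Let $H=(U,D)$ be a demand graph and $F$ a unit $H$-boundary flow in $G$. Then there exists an integral $H$-boundary flow $F^*$ such that $$\operatorname{con}_2(F^* )\le\operatorname{con}_2(F)+\sqrt{\operatorname{con}_1(F)}.$$ Furthermore, if $|B|\ge|V|^{\frac14+\epsilon}$ for some $\epsilon>0$, then $$\operatorname{con}_2(F^* )\le 2\operatorname{con}_2(F)+|B|^{\frac{2}{1+4\epsilon}}.$$
   Context: For $u,v\in V$, $\mathcal{P}_{uv}$ is the set of simple paths in $G$ between $u$ and $v$; "$x\in p$" means $x$ is a vertex of path $p$. Let $\mathcal{P}=\bigcup_{u,v\in B}\mathcal{P}_{uv}$. A boundary flow is a map $F:\mathcal{P}\to\mathbb{R}_+$. Its vertex congestion at $v\in V$ is $C_F(v)=\sum_{p\in\mathcal{P}:v\in p}F(p)$, and $\operatorname{con}_p(F)=\left(\sum_{v\in V}C_F(v)^p\right)^{1/p}$ for $p\ge1$. $F$ is integral if $|\{p\in\mathcal{P}_{uv}:F(p)>0\}|\le1$ for all $u,v\in B$. A demand graph is any graph $H=(U,D)$. $F$ is a unit $H$-boundary flow if there exists an injective map $g:U\to B$ such that $\sum_{p\in\mathcal{P}_{g(i)g(j)}}F(p)=1$ for every edge $(i,j)\in D$, and $F(p)=0$ whenever $p\notin\bigcup_{(i,j)\in D}\mathcal{P}_{g(i)g(j)}$. An integral $H$-boundary flow is a unit $H$-boundary flow that is also integral. *)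

theory Defs
  imports Complex_Main
begin

definition finite_graph :: "'a set \<Rightarrow> 'a set set \<Rightarrow> bool" where
  "finite_graph V E \<longleftrightarrow> finite V \<and> (\<forall>e\<in>E. card e = 2 \<and> e \<subseteq> V)"

definition demand_graph :: "'b set \<Rightarrow> 'b set set \<Rightarrow> bool" where
  "demand_graph U D \<longleftrightarrow> (\<forall>e\<in>D. card e = 2 \<and> e \<subseteq> U)"

definition simple_path :: "'a set \<Rightarrow> 'a set set \<Rightarrow> 'a list \<Rightarrow> bool" where
  "simple_path V E p \<longleftrightarrow> p \<noteq> [] \<and> distinct p \<and> set p \<subseteq> V \<and>
     (\<forall>i. Suc i < length p \<longrightarrow> {p ! i, p ! Suc i} \<in> E)"

text \<open>Since G is undirected, a path and its
  reversal are the same path; we represent each path by its vertex list oriented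
  from the smaller endpoint to the larger one, so that P_uv = P_vu.\<close>
definition paths_between :: "'a::linorder set \<Rightarrow> 'a set set \<Rightarrow> 'a \<Rightarrow> 'a \<Rightarrow> 'a list set" where
  "paths_between V E u v =
     {p. simple_path V E p \<and> hd p = min u v \<and> last p = max u v}"

definition all_paths :: "'a::linorder set \<Rightarrow> 'a set set \<Rightarrow> 'a set \<Rightarrow> 'a list set" where
  "all_paths V E B = (\<Union>u\<in>B. \<Union>v\<in>B. paths_between V E u v)"

definition boundary_flow :: "'a::linorder set \<Rightarrow> 'a set set \<Rightarrow> 'a set \<Rightarrow> ('a list \<Rightarrow> real) \<Rightarrow> bool" where
  "boundary_flow V E B F \<longleftrightarrow> (\<forall>p\<in>all_paths V E B. F p \<ge> 0)"

definition congestion :: "'a::linorder set \<Rightarrow> 'a set set \<Rightarrow> 'a set \<Rightarrow> ('a list \<Rightarrow> real) \<Rightarrow> 'a \<Rightarrow> real" where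
  "congestion V E B F v = (\<Sum>p\<in>{p\<in>all_paths V E B. v \<in> set p}. F p)"

definition con :: "'a::linorder set \<Rightarrow> 'a set set \<Rightarrow> 'a set \<Rightarrow> real \<Rightarrow> ('a list \<Rightarrow> real) \<Rightarrow> real" where
  "con V E B q F = (\<Sum>v\<in>V. congestion V E B F v powr q) powr (1 / q)"

definition integral_flow :: "'a::linorder set \<Rightarrow> 'a set set \<Rightarrow> 'a set \<Rightarrow> ('a list \<Rightarrow> real) \<Rightarrow> bool" where
  "integral_flow V E B F \<longleftrightarrow>
     (\<forall>u\<in>B. \<forall>v\<in>B. card {p\<in>paths_between V E u v. F p > 0} \<le> 1)"

definition unit_H_flow :: "'a::linorder set \<Rightarrow> 'a set set \<Rightarrow> 'a set \<Rightarrow> 'b set \<Rightarrow> 'b set set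
    \<Rightarrow> ('a list \<Rightarrow> real) \<Rightarrow> bool" where
  "unit_H_flow V E B U D F \<longleftrightarrow> boundary_flow V E B F \<and>
     (\<exists>g. inj_on g U \<and> g ` U \<subseteq> B \<and>
        (\<forall>i j. {i, j} \<in> D \<longrightarrow> (\<Sum>p\<in>paths_between V E (g i) (g j). F p) = 1) \<and>
        (\<forall>p\<in>all_paths V E B.
           (\<forall>i j. {i, j} \<in> D \<longrightarrow> p \<notin> paths_between V E (g i) (g j)) \<longrightarrow> F p = 0))"

definition integral_H_flow :: "'a::linorder set \<Rightarrow> 'a set set \<Rightarrow> 'a set \<Rightarrow> 'b set \<Rightarrow> 'b set set
    \<Rightarrow> ('a list \<Rightarrow> real) \<Rightarrow> bool" where
  "integral_H_flow V E B U D F \<longleftrightarrow> unit_H_flow V E B U D F \<and> integral_flow V E B F"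

end

theory Submission
  imports Defs
begin
definition chi :: "'a list \<Rightarrow> 'a \<Rightarrow> real" where
  "chi p v = (if v \<in> set p then 1 else 0)"

lemma chi_sq: "chi p v * chi p v = chi p v" by (simp add: chi_def)
lemma chi_nn: "chi p v \<ge> 0" by (simp add: chi_def)

lemma exists_le_avg:
  fixes w R :: "'p \<Rightarrow> real"
  assumes "finite S" "\<forall>p\<in>S. w p \<ge> 0" "sum w S = 1" "(\<Sum>p\<in>S. w p * R p) \<le> T"
  shows "\<exists>p\<in>S. R p \<le> T"
proof (rule ccontr)
  assume "\<not> ?thesis"
  hence lt: "\<forall>p\<in>S. T < R p" by force
  have "(\<Sum>p\<in>S. w p * (R p - T)) = (\<Sum>p\<in>S. w p * R p) - T"
    using assms(3) by (simp add: right_diff_distrib sum_subtractf sum_distrib_right[symmetric])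
  hence le0: "(\<Sum>p\<in>S. w p * (R p - T)) \<le> 0" using assms(4) by linarith
  have nn: "\<forall>p\<in>S. w p * (R p - T) \<ge> 0" using lt assms(2) by auto
  have "\<forall>p\<in>S. w p * (R p - T) = 0"
    using sum_nonneg_eq_0_iff[OF assms(1)] nn le0 by (meson antisym sum_nonneg)
  hence "\<forall>p\<in>S. w p = 0" using lt by auto
  hence "sum w S = 0" by simp
  thus False using assms(3) by simp
qed

lemma core:
  fixes w :: "'a list \<Rightarrow> real" and S :: "'k \<Rightarrow> 'a list set"
  assumes "finite K" "finite V"
    and "\<forall>k\<in>K. finite (S k) \<and> (\<forall>p\<in>S k. w p \<ge> 0) \<and> sum w (S k) = 1"
  shows "\<exists>\<sigma>. (\<forall>k\<in>K. \<sigma> k \<in> S k) \<and>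
     (\<Sum>v\<in>V. (a v + (\<Sum>k\<in>K. chi (\<sigma> k) v))\<^sup>2) \<le>
     (\<Sum>v\<in>V. (a v + (\<Sum>k\<in>K. \<Sum>p\<in>S k. w p * chi p v))\<^sup>2) +
     (\<Sum>v\<in>V. \<Sum>k\<in>K. \<Sum>p\<in>S k. w p * chi p v)"
  using assms(1,3)
proof (induction K arbitrary: a rule: finite_induct)
  case empty
  then show ?case by simp
next
  case (insert k0 K)
  define CK where "CK v = (\<Sum>k\<in>K. \<Sum>p\<in>S k. w p * chi p v)" for v
  define f where "f v = (\<Sum>p\<in>S k0. w p * chi p v)" for v
  have fin0: "finite (S k0)" and w0: "\<forall>p\<in>S k0. w p \<ge> 0" and s0: "sum w (S k0) = 1"
    using insert.prems by auto
  have IH: "\<And>p. \<exists>\<sigma>. (\<forall>k\<in>K. \<sigma> k \<in> S k) \<and>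
     (\<Sum>v\<in>V. ((a v + chi p v) + (\<Sum>k\<in>K. chi (\<sigma> k) v))\<^sup>2) \<le>
     (\<Sum>v\<in>V. ((a v + chi p v) + CK v)\<^sup>2) + (\<Sum>v\<in>V. CK v)"
    unfolding CK_def using insert.IH insert.prems by auto
  from choice[OF allI[OF IH]] obtain sg where sg0: "\<forall>p. (\<forall>k\<in>K. sg p k \<in> S k) \<and>
     (\<Sum>v\<in>V. ((a v + chi p v) + (\<Sum>k\<in>K. chi (sg p k) v))\<^sup>2) \<le>
     (\<Sum>v\<in>V. ((a v + chi p v) + CK v)\<^sup>2) + (\<Sum>v\<in>V. CK v)" ..
  note sg = sg0[rule_format]
  define R where "R p = (\<Sum>v\<in>V. ((a v + chi p v) + CK v)\<^sup>2) + (\<Sum>v\<in>V. CK v)" for p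
  define T where "T = (\<Sum>v\<in>V. (a v + (f v + CK v))\<^sup>2) + (\<Sum>v\<in>V. f v + CK v)"
  have Rexp: "R p = (\<Sum>v\<in>V. (a v + CK v)\<^sup>2 + (2 * (a v + CK v) + 1) * chi p v) + (\<Sum>v\<in>V. CK v)" for p
    unfolding R_def
    by (intro arg_cong2[where f="(+)"] refl sum.cong) (auto simp: power2_eq_square algebra_simps chi_def)
  have "(\<Sum>p\<in>S k0. w p * R p) = (\<Sum>p\<in>S k0. w p * ((\<Sum>v\<in>V. (a v + CK v)\<^sup>2) + (\<Sum>v\<in>V. CK v))
        + (\<Sum>v\<in>V. w p * ((2 * (a v + CK v) + 1) * chi p v)))"
    unfolding Rexp by (simp add: sum.distrib sum_distrib_left algebra_simps)
  also have "\<dots> = ((\<Sum>v\<in>V. (a v + CK v)\<^sup>2) + (\<Sum>v\<in>V. CK v)) + (\<Sum>v\<in>V. (2 * (a v + CK v) + 1) * f v)"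
  proof -
    have A: "(\<Sum>p\<in>S k0. w p * ((\<Sum>v\<in>V. (a v + CK v)\<^sup>2) + (\<Sum>v\<in>V. CK v)))
       = ((\<Sum>v\<in>V. (a v + CK v)\<^sup>2) + (\<Sum>v\<in>V. CK v))"
      by (simp add: sum_distrib_right[symmetric] s0)
    have B: "(\<Sum>p\<in>S k0. \<Sum>v\<in>V. w p * ((2 * (a v + CK v) + 1) * chi p v))
       = (\<Sum>v\<in>V. \<Sum>p\<in>S k0. w p * ((2 * (a v + CK v) + 1) * chi p v))"
      by (rule sum.swap)
    have C: "(\<Sum>v\<in>V. \<Sum>p\<in>S k0. w p * ((2 * (a v + CK v) + 1) * chi p v))
       = (\<Sum>v\<in>V. (2 * (a v + CK v) + 1) * f v)"
      unfolding f_def by (rule sum.cong[OF refl]) (simp add: sum_distrib_left mult.left_commute)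
    show ?thesis unfolding sum.distrib A B C ..
  qed
  also have "\<dots> \<le> T"
  proof -
    have "T - ((\<Sum>v\<in>V. (a v + CK v)\<^sup>2) + (\<Sum>v\<in>V. CK v) + (\<Sum>v\<in>V. (2 * (a v + CK v) + 1) * f v))
        = (\<Sum>v\<in>V. (f v)\<^sup>2)"
      unfolding T_def by (simp add: sum.distrib[symmetric] sum_subtractf[symmetric] power2_eq_square algebra_simps)
    moreover have "(\<Sum>v\<in>V. (f v)\<^sup>2) \<ge> 0" by (simp add: sum_nonneg)
    ultimately show ?thesis by linarith
  qed
  finally obtain p where p: "p \<in> S k0" "R p \<le> T"
    using exists_le_avg[OF fin0 w0 s0] by blast
  define \<sigma> where "\<sigma> = (sg p)(k0 := p)"
  have sK: "\<forall>k\<in>K. \<sigma> k = sg p k" using insert.hyps unfolding \<sigma>_def by auto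
  have sgp1: "\<forall>k\<in>K. sg p k \<in> S k" using sg[of p] by (rule conjunct1)
  have sgp2: "(\<Sum>v\<in>V. ((a v + chi p v) + (\<Sum>k\<in>K. chi (sg p k) v))\<^sup>2) \<le> R p"
    unfolding R_def using sg[of p] by (rule conjunct2)
  have G1: "\<forall>k\<in>insert k0 K. \<sigma> k \<in> S k"
  proof
    fix k assume "k \<in> insert k0 K"
    then show "\<sigma> k \<in> S k" using sgp1 sK p(1) by (cases "k = k0") (simp_all add: \<sigma>_def)
  qed
  have E1: "(\<Sum>k\<in>insert k0 K. chi (\<sigma> k) v) = chi p v + (\<Sum>k\<in>K. chi (sg p k) v)" for v
  proof -
    have "(\<Sum>k\<in>insert k0 K. chi (\<sigma> k) v) = chi (\<sigma> k0) v + (\<Sum>k\<in>K. chi (\<sigma> k) v)"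
      using insert.hyps by (rule sum.insert)
    also have "(\<Sum>k\<in>K. chi (\<sigma> k) v) = (\<Sum>k\<in>K. chi (sg p k) v)"
      using sK by (intro sum.cong) auto
    finally show ?thesis by (simp add: \<sigma>_def)
  qed
  have E2: "(\<Sum>k\<in>insert k0 K. \<Sum>p\<in>S k. w p * chi p v) = f v + CK v" for v
    unfolding f_def CK_def using insert.hyps by (rule sum.insert)
  have L: "(\<Sum>v\<in>V. (a v + (\<Sum>k\<in>insert k0 K. chi (\<sigma> k) v))\<^sup>2)
     = (\<Sum>v\<in>V. ((a v + chi p v) + (\<Sum>k\<in>K. chi (sg p k) v))\<^sup>2)"
    unfolding E1 by (simp add: add.assoc)
  have Tr: "T = (\<Sum>v\<in>V. (a v + (\<Sum>k\<in>insert k0 K. \<Sum>p\<in>S k. w p * chi p v))\<^sup>2) +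
     (\<Sum>v\<in>V. \<Sum>k\<in>insert k0 K. \<Sum>p\<in>S k. w p * chi p v)"
    unfolding T_def E2 ..
  show ?case
    apply (rule exI[of _ \<sigma>])
    apply (rule conjI[OF G1])
    unfolding L Tr[symmetric] using sgp2 p(2) by linarith
qed

lemma pb_sym: "paths_between V E (min u v) (max u v) = paths_between V E u v"
  unfolding paths_between_def by (cases "u \<le> v") (auto simp: min_def max_def)

lemma pb_ends: "p \<in> paths_between V E u v \<Longrightarrow> {hd p, last p} = {u, v}"
  unfolding paths_between_def by (auto simp: min_def max_def)

lemma cs_sum:
  fixes C :: "'v \<Rightarrow> real"
  assumes "finite V"
  shows "(\<Sum>v\<in>V. C v)\<^sup>2 \<le> real (card V) * (\<Sum>v\<in>V. (C v)\<^sup>2)"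
proof (cases "card V = 0")
  case True then show ?thesis using assms by simp
next
  case False
  define n where "n = real (card V)"
  define s where "s = (\<Sum>v\<in>V. C v)"
  define Q where "Q = (\<Sum>v\<in>V. (C v)\<^sup>2)"
  have npos: "n > 0" using False n_def by simp
  have "(\<Sum>v\<in>V. (n * C v - s)\<^sup>2) = (\<Sum>v\<in>V. n\<^sup>2 * (C v)\<^sup>2 - (2 * n * s) * C v + s\<^sup>2)"
    by (rule sum.cong) (auto simp: power2_eq_square algebra_simps)
  also have "\<dots> = n\<^sup>2 * Q - (2 * n * s) * s + n * s\<^sup>2"
    unfolding Q_def s_def n_def
    by (simp add: sum.distrib sum_subtractf sum_distrib_left)
  finally have "0 \<le> n\<^sup>2 * Q - (2 * n * s) * s + n * s\<^sup>2"
    by (metis sum_nonneg zero_le_power2)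
  hence "n * s\<^sup>2 \<le> n * (n * Q)" by (simp add: power2_eq_square algebra_simps)
  hence "s\<^sup>2 \<le> n * Q" using npos by simp
  then show ?thesis unfolding s_def n_def Q_def .
qed

lemma cong_sum:
  fixes h :: "'a::linorder list \<Rightarrow> real" and S :: "'k \<Rightarrow> 'a list set"
  assumes finA: "finite (all_paths V E B)" and finD: "finite D"
    and SA: "\<forall>k\<in>D. S k \<subseteq> all_paths V E B"
    and disj: "\<forall>k\<in>D. \<forall>k'\<in>D. \<forall>p. p \<in> S k \<longrightarrow> p \<in> S k' \<longrightarrow> k = k'"
    and zero: "\<forall>p\<in>all_paths V E B. p \<notin> (\<Union>k\<in>D. S k) \<longrightarrow> h p = 0"
  shows "congestion V E B h v = (\<Sum>k\<in>D. \<Sum>p\<in>S k. h p * chi p v)"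
proof -
  let ?A = "all_paths V E B"
  have "congestion V E B h v = (\<Sum>p\<in>?A. h p * chi p v)"
    unfolding congestion_def chi_def using finA by (subst sum.inter_filter) (auto intro!: sum.cong)
  also have "\<dots> = (\<Sum>p\<in>(\<Union>k\<in>D. S k). h p * chi p v)"
    using SA zero finA by (intro sum.mono_neutral_right) auto
  also have "\<dots> = (\<Sum>k\<in>D. \<Sum>p\<in>S k. h p * chi p v)"
  proof (rule sum.UNION_disjoint[OF finD])
    show "\<forall>k\<in>D. finite (S k)" using SA finA by (meson finite_subset)
    show "\<forall>k\<in>D. \<forall>k'\<in>D. k \<noteq> k' \<longrightarrow> S k \<inter> S k' = {}" using disj by blast
  qed
  finally show ?thesis .
qed

theorem mainTheorem11:
  fixes V :: "'a::linorder set" and E :: "'a set set" and B :: "'a set"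
    and U :: "'b set" and D :: "'b set set" and F :: "'a list \<Rightarrow> real"
  assumes "finite_graph V E" and "B \<subseteq> V"
    and "demand_graph U D"
    and "unit_H_flow V E B U D F"
  shows "\<exists>Fs. integral_H_flow V E B U D Fs \<and>
           con V E B 2 Fs \<le> con V E B 2 F + sqrt (con V E B 1 F) \<and>
           (\<forall>\<epsilon>::real. \<epsilon> > 0 \<longrightarrow> real (card B) \<ge> real (card V) powr (1/4 + \<epsilon>) \<longrightarrow>
              con V E B 2 Fs \<le> 2 * con V E B 2 F + real (card B) powr (2 / (1 + 4 * \<epsilon>)))"
proof -
  let ?A = "all_paths V E B"
  have finV: "finite V" using assms(1) unfolding finite_graph_def by blast
  have finB: "finite B" using assms(2) finV finite_subset by blast
  have finA: "finite ?A"
  proof (rule finite_subset[OF _ finite_subset_distinct[OF finV]])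
    show "?A \<subseteq> {xs. set xs \<subseteq> V \<and> distinct xs}"
      unfolding all_paths_def paths_between_def simple_path_def by auto
  qed
  have Fnn: "\<forall>p\<in>?A. F p \<ge> 0" using assms(4) unfolding unit_H_flow_def boundary_flow_def by blast
  obtain g where ginj: "inj_on g U" and gB: "g ` U \<subseteq> B"
    and gsum: "\<forall>i j. {i, j} \<in> D \<longrightarrow> (\<Sum>p\<in>paths_between V E (g i) (g j). F p) = 1"
    and gzero: "\<forall>p\<in>?A. (\<forall>i j. {i, j} \<in> D \<longrightarrow> p \<notin> paths_between V E (g i) (g j)) \<longrightarrow> F p = 0"
    using assms(4) unfolding unit_H_flow_def by blast
  have finU: "finite U" using finite_imageD[OF finite_subset[OF gB finB] ginj] .
  have DU: "\<forall>k\<in>D. k \<subseteq> U" using assms(3) unfolding demand_graph_def by blast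
  have finD: "finite D"
    using finite_subset[OF _ finite_Pow_iff[THEN iffD2, OF finU]] DU by blast
  have Dpair: "\<exists>i j. k = {i, j} \<and> i \<in> U \<and> j \<in> U" if "k \<in> D" for k
  proof -
    have "card k = 2" using assms(3) that unfolding demand_graph_def by blast
    then obtain i j where "k = {i, j}" by (meson card_2_iff)
    then show ?thesis using DU that by blast
  qed
  define S where "S k = paths_between V E (Min (g ` k)) (Max (g ` k))" for k
  have Seq: "S {i, j} = paths_between V E (g i) (g j)" for i j
    unfolding S_def by (simp add: pb_sym)
  have SA: "\<forall>k\<in>D. S k \<subseteq> ?A"
  proof
    fix k assume "k \<in> D"
    then obtain i j where k: "k = {i, j}" "i \<in> U" "j \<in> U" using Dpair by blast
    then have "g i \<in> B" "g j \<in> B" using gB by auto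
    then show "S k \<subseteq> ?A" unfolding k Seq all_paths_def by blast
  qed
  have Sends: "{hd p, last p} = g ` k" if kD: "k \<in> D" and pS: "p \<in> S k" for k p
  proof -
    obtain i j where k: "k = {i, j}" using Dpair kD by blast
    show ?thesis using pb_ends[of p V E "g i" "g j"] pS unfolding k Seq by simp
  qed
  have disj: "\<forall>k\<in>D. \<forall>k'\<in>D. \<forall>p. p \<in> S k \<longrightarrow> p \<in> S k' \<longrightarrow> k = k'"
  proof (intro ballI allI impI)
    fix k k' p assume "k \<in> D" "k' \<in> D" "p \<in> S k" "p \<in> S k'"
    then have "g ` k = g ` k'" using Sends by metis
    then show "k = k'" using inj_on_image_eq_iff[OF ginj] DU \<open>k \<in> D\<close> \<open>k' \<in> D\<close> by blast
  qed
  have Ssum: "\<forall>k\<in>D. finite (S k) \<and> (\<forall>p\<in>S k. F p \<ge> 0) \<and> sum F (S k) = 1"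
  proof
    fix k assume kD: "k \<in> D"
    then obtain i j where k: "k = {i, j}" using Dpair by blast
    show "finite (S k) \<and> (\<forall>p\<in>S k. F p \<ge> 0) \<and> sum F (S k) = 1"
    proof (intro conjI)
      have sub: "S k \<subseteq> ?A" using SA kD by blast
      show "finite (S k)" using sub finA by (rule finite_subset)
      show "\<forall>p\<in>S k. F p \<ge> 0" using sub Fnn by blast
      show "sum F (S k) = 1" using gsum kD unfolding k Seq by blast
    qed
  qed
  have Fzero: "\<forall>p\<in>?A. p \<notin> (\<Union>k\<in>D. S k) \<longrightarrow> F p = 0"
  proof (intro ballI impI)
    fix p assume pA: "p \<in> ?A" and pn: "p \<notin> (\<Union>k\<in>D. S k)"
    have "\<forall>i j. {i, j} \<in> D \<longrightarrow> p \<notin> paths_between V E (g i) (g j)"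
      using pn unfolding Seq[symmetric] by blast
    then show "F p = 0" using gzero pA by blast
  qed
  obtain \<sigma> where \<sigma>S: "\<forall>k\<in>D. \<sigma> k \<in> S k" and
    \<sigma>ineq: "(\<Sum>v\<in>V. ((\<lambda>_. 0::real) v + (\<Sum>k\<in>D. chi (\<sigma> k) v))\<^sup>2) \<le>
     (\<Sum>v\<in>V. ((\<lambda>_. 0::real) v + (\<Sum>k\<in>D. \<Sum>p\<in>S k. F p * chi p v))\<^sup>2) +
     (\<Sum>v\<in>V. \<Sum>k\<in>D. \<Sum>p\<in>S k. F p * chi p v)"
    using core[OF finD finV Ssum, of "\<lambda>_. 0"] by blast
  define Fs where "Fs p = (if p \<in> \<sigma> ` D then 1 else (0::real))" for p
  have Fs_on_S: "Fs p = (if p = \<sigma> k then 1 else 0)" if "k \<in> D" "p \<in> S k" for k p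
  proof (cases "p \<in> \<sigma> ` D")
    case True
    then obtain k' where "k' \<in> D" "p = \<sigma> k'" by blast
    then have "k' = k" using disj \<sigma>S that by blast
    then show ?thesis using True \<open>p = \<sigma> k'\<close> by (simp add: Fs_def)
  next
    case False then show ?thesis using that by (auto simp: Fs_def)
  qed
  have FsS: "(\<Sum>p\<in>S k. Fs p) = 1" if "k \<in> D" for k
  proof -
    have "(\<Sum>p\<in>S k. Fs p) = (\<Sum>p\<in>S k. if p = \<sigma> k then 1 else 0)"
      using Fs_on_S that by (intro sum.cong) auto
    also have "\<dots> = 1" using Ssum \<sigma>S that by simp
    finally show ?thesis .
  qed
  have Fszero: "\<forall>p\<in>?A. p \<notin> (\<Union>k\<in>D. S k) \<longrightarrow> Fs p = 0"
    using \<sigma>S by (auto simp: Fs_def)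
  have CF: "congestion V E B F v = (\<Sum>k\<in>D. \<Sum>p\<in>S k. F p * chi p v)" for v
    by (rule cong_sum[OF finA finD SA disj Fzero])
  have CFs: "congestion V E B Fs v = (\<Sum>k\<in>D. chi (\<sigma> k) v)" for v
  proof -
    have "congestion V E B Fs v = (\<Sum>k\<in>D. \<Sum>p\<in>S k. Fs p * chi p v)"
      by (rule cong_sum[OF finA finD SA disj Fszero])
    also have "\<dots> = (\<Sum>k\<in>D. chi (\<sigma> k) v)"
    proof (rule sum.cong[OF refl])
      fix k assume kD: "k \<in> D"
      have "(\<Sum>p\<in>S k. Fs p * chi p v) = (\<Sum>p\<in>S k. if p = \<sigma> k then chi p v else 0)"
        using Fs_on_S kD by (intro sum.cong) auto
      also have "\<dots> = chi (\<sigma> k) v" using Ssum \<sigma>S kD by simp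
      finally show "(\<Sum>p\<in>S k. Fs p * chi p v) = chi (\<sigma> k) v" .
    qed
    finally show ?thesis .
  qed
  have u1: "\<forall>p\<in>?A. 0 \<le> Fs p" by (simp add: Fs_def)
  have u3: "\<forall>i j. {i, j} \<in> D \<longrightarrow> (\<Sum>p\<in>paths_between V E (g i) (g j). Fs p) = 1"
    using FsS Seq by metis
  have u4: "\<forall>p\<in>?A. (\<forall>i j. {i, j} \<in> D \<longrightarrow> p \<notin> paths_between V E (g i) (g j)) \<longrightarrow> Fs p = 0"
  proof (intro ballI impI)
    fix p assume pA: "p \<in> ?A" and h: "\<forall>i j. {i, j} \<in> D \<longrightarrow> p \<notin> paths_between V E (g i) (g j)"
    have "p \<notin> (\<Union>k\<in>D. S k)"
    proof
      assume "p \<in> (\<Union>k\<in>D. S k)"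
      then obtain k where "k \<in> D" "p \<in> S k" by blast
      moreover obtain i j where "k = {i, j}" using Dpair \<open>k \<in> D\<close> by blast
      ultimately show False using h Seq by metis
    qed
    then show "Fs p = 0" using Fszero pA by blast
  qed
  have unitFs: "unit_H_flow V E B U D Fs"
    unfolding unit_H_flow_def boundary_flow_def using u1 ginj gB u3 u4 by blast
  have intFs: "integral_flow V E B Fs"
    unfolding integral_flow_def
  proof (intro ballI)
    fix u v assume "u \<in> B" "v \<in> B"
    let ?P = "{p \<in> paths_between V E u v. Fs p > 0}"
    have uniq: "\<forall>p\<in>?P. \<forall>q\<in>?P. p = q"
    proof (intro ballI)
      fix p q assume p: "p \<in> ?P" and q: "q \<in> ?P"
      obtain k where k: "k \<in> D" "p = \<sigma> k" using p by (auto simp: Fs_def split: if_splits)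
      obtain k' where k': "k' \<in> D" "q = \<sigma> k'" using q by (auto simp: Fs_def split: if_splits)
      have "g ` k = {u, v}" using Sends[OF k(1)] \<sigma>S k pb_ends p by fastforce
      moreover have "g ` k' = {u, v}" using Sends[OF k'(1)] \<sigma>S k' pb_ends q by fastforce
      ultimately have "k = k'" using inj_on_image_eq_iff[OF ginj] DU k k' by metis
      then show "p = q" using k k' by simp
    qed
    have finP: "finite ?P"
    proof (rule finite_subset[OF _ finA])
      show "?P \<subseteq> ?A" using \<open>u \<in> B\<close> \<open>v \<in> B\<close> by (auto simp: all_paths_def)
    qed
    have "card ?P \<le> Suc 0" using card_le_Suc0_iff_eq[OF finP] uniq by blast
    then show "card ?P \<le> 1" by simp
  qed
  define C where "C v = congestion V E B F v" for v
  define N where "N v = congestion V E B Fs v" for v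
  have Cnn: "C v \<ge> 0" for v
    unfolding C_def CF using Ssum by (auto intro!: sum_nonneg mult_nonneg_nonneg simp: chi_nn)
  have Nnn: "N v \<ge> 0" for v unfolding N_def CFs by (auto intro!: sum_nonneg simp: chi_nn)
  have ineq: "(\<Sum>v\<in>V. (N v)\<^sup>2) \<le> (\<Sum>v\<in>V. (C v)\<^sup>2) + (\<Sum>v\<in>V. C v)"
    using \<sigma>ineq unfolding N_def C_def CF CFs by simp
  define c2 where "c2 = sqrt (\<Sum>v\<in>V. (C v)\<^sup>2)"
  define c1 where "c1 = (\<Sum>v\<in>V. C v)"
  have c1nn: "c1 \<ge> 0" unfolding c1_def using Cnn by (simp add: sum_nonneg)
  have c2nn: "c2 \<ge> 0" unfolding c2_def by (simp add: sum_nonneg)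
  have con2F: "con V E B 2 F = c2"
    unfolding con_def c2_def C_def[symmetric] using Cnn
    by (simp add: powr_half_sqrt sum_nonneg)
  have con1F: "con V E B 1 F = c1"
    unfolding con_def c1_def C_def[symmetric] using Cnn
    by (simp add: powr_one sum_nonneg)
  have con2Fs: "con V E B 2 Fs = sqrt (\<Sum>v\<in>V. (N v)\<^sup>2)"
    unfolding con_def N_def[symmetric] using Nnn
    by (simp add: powr_half_sqrt sum_nonneg)
  have main1: "con V E B 2 Fs \<le> c2 + sqrt c1"
  proof -
    have "sqrt (\<Sum>v\<in>V. (N v)\<^sup>2) \<le> sqrt ((\<Sum>v\<in>V. (C v)\<^sup>2) + c1)"
      using ineq c1_def by simp
    also have "\<dots> \<le> c2 + sqrt c1"
      unfolding c2_def using sqrt_add_le_add_sqrt c1nn by (simp add: sum_nonneg)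
    finally show ?thesis using con2Fs by simp
  qed
  have main2: "con V E B 2 Fs \<le> 2 * c2 + real (card B) powr (2 / (1 + 4 * \<epsilon>))"
    if eps: "\<epsilon> > 0" and hB: "real (card B) \<ge> real (card V) powr (1/4 + \<epsilon>)" for \<epsilon> :: real
  proof -
    define n where "n = real (card V)"
    have nnn: "n \<ge> 0" unfolding n_def by simp
    have cs: "c1\<^sup>2 \<le> n * c2\<^sup>2"
      unfolding c1_def c2_def n_def using cs_sum[OF finV, of C] by (simp add: sum_nonneg)
    have sq1: "sqrt c1 \<le> c2 + sqrt n"
    proof (cases "c2 \<ge> sqrt n")
      case True
      have "(sqrt n)\<^sup>2 \<le> c2\<^sup>2" using True by (rule power_mono) (simp add: nnn)
      hence "n \<le> c2\<^sup>2" using nnn by simp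
      hence "n * c2\<^sup>2 \<le> c2\<^sup>2 * c2\<^sup>2" by (rule mult_right_mono) simp
      hence "c1\<^sup>2 \<le> (c2\<^sup>2)\<^sup>2" using cs by (simp add: power2_eq_square)
      hence "c1 \<le> c2\<^sup>2" by (rule power2_le_imp_le) simp
      hence "sqrt c1 \<le> sqrt (c2\<^sup>2)" by (simp only: real_sqrt_le_iff)
      hence "sqrt c1 \<le> c2" using c2nn by simp
      moreover have "sqrt n \<ge> 0" using nnn by simp
      ultimately show ?thesis by linarith
    next
      case False
      hence "c2 \<le> sqrt n" by simp
      hence "c2\<^sup>2 \<le> (sqrt n)\<^sup>2" using c2nn by (rule power_mono)
      hence "c2\<^sup>2 \<le> n" using nnn by simp
      hence "n * c2\<^sup>2 \<le> n * n" using nnn by (rule mult_left_mono)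
      hence "c1\<^sup>2 \<le> n\<^sup>2" using cs by (simp add: power2_eq_square)
      hence "c1 \<le> n" using nnn by (rule power2_le_imp_le)
      hence "sqrt c1 \<le> sqrt n" by simp
      then show ?thesis using c2nn by linarith
    qed
    have sqn: "sqrt n \<le> real (card B) powr (2 / (1 + 4 * \<epsilon>))"
    proof (cases "n = 0")
      case True then show ?thesis by simp
    next
      case False
      hence npos: "n > 0" using nnn by simp
      have "sqrt n = n powr ((1/4 + \<epsilon>) * (2 / (1 + 4 * \<epsilon>)))"
      proof -
        have ex: "(1/4 + \<epsilon>) * (2 / (1 + 4 * \<epsilon>)) = 1/2" using eps by (simp add: field_simps)
        show ?thesis unfolding ex using nnn by (simp add: powr_half_sqrt)
      qed
      also have "\<dots> = (n powr (1/4 + \<epsilon>)) powr (2 / (1 + 4 * \<epsilon>))" by (simp add: powr_powr)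
      also have "\<dots> \<le> real (card B) powr (2 / (1 + 4 * \<epsilon>))"
        using hB eps unfolding n_def by (intro powr_mono2) auto
      finally show ?thesis .
    qed
    show ?thesis using main1 sq1 sqn by linarith
  qed
  show ?thesis
    apply (rule exI[of _ Fs])
    unfolding integral_H_flow_def con2F con1F
    using unitFs intFs main1 main2 by blast
qed

end
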